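(* Let $m\geq 0$ and $k\geq 1$ be integers and let $n$ be a nonnegative integer with $n\geq t(m,k)$, where \[ t(m,k)= m\left(\left\lfloor \frac{m}{k}\right\rfloor +1\right)k-\binom{\lfloor m/k\rfloor +1}{2}k^2 . \] Then $b(n,k)\geq m$.
   Context: For a cell $u$ of the Young diagram of a partition $\lambda$, the hook length of $u$ is the number of cells $v$ of the diagram with $v=u$, or $v$ below $u$ in the same column, or $v$ to the right of $u$ in the same row. $\alpha_k(\lambda)$ is the number of cells of the Young diagram of $\lambda$ with hook length exactly $k$. $P(n)$ is the set of partitions of $n$ (with $P(0)$ containing only the empty partition), and $b(n,k)=\max\{\alpha_k(\lambda)\colon\lambda\in P(n)\}$. *)

theory Defs
  imports Main
begin

definition partitions :: "nat \<Rightarrow> nat list set" where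
  "partitions n = {lam. sorted_wrt (\<ge>) lam \<and> 0 \<notin> set lam \<and> sum_list lam = n}"

definition young_cells :: "nat list \<Rightarrow> (nat \<times> nat) set" where
  "young_cells lam = {(i, j). i < length lam \<and> j < lam ! i}"

definition hook_length :: "nat list \<Rightarrow> nat \<times> nat \<Rightarrow> nat" where
  "hook_length lam u = card {v \<in> young_cells lam.
      v = u \<or> (snd v = snd u \<and> fst v > fst u) \<or> (fst v = fst u \<and> snd v > snd u)}"

definition alpha :: "nat \<Rightarrow> nat list \<Rightarrow> nat" where
  "alpha k lam = card {u \<in> young_cells lam. hook_length lam u = k}"

definition b :: "nat \<Rightarrow> nat \<Rightarrow> nat" where
  "b n k = Max (alpha k ` partitions n)"

definition t :: "nat \<Rightarrow> nat \<Rightarrow> int" where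
  "t m k = int m * (int (m div k) + 1) * int k - int ((m div k + 1) choose 2) * int k ^ 2"

end

theory Submission
  imports Defs
begin

definition cnt :: "nat list \<Rightarrow> nat \<Rightarrow> nat" where
  "cnt xs j = length (takeWhile (\<lambda>x. j < x) xs)"

lemma cnt_Nil[simp]: "cnt [] j = 0" by (simp add: cnt_def)
lemma cnt_Cons[simp]: "cnt (x # xs) j = (if j < x then Suc (cnt xs j) else 0)"
  by (simp add: cnt_def)
lemma cnt_append: "cnt (xs @ ys) j = (if \<forall>x\<in>set xs. j < x then length xs + cnt ys j else cnt xs j)"
  by (induction xs) auto
lemma cnt_replicate[simp]: "cnt (replicate n a) j = (if j < a then n else 0)"
  by (induction n) auto
lemma cnt_zero: "\<forall>y\<in>set xs. y \<le> j \<Longrightarrow> cnt xs j = 0"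
  by (cases xs) auto

lemma cnt_iff:
  assumes "sorted_wrt (\<ge>) xs"
  shows "(i < cnt xs j) \<longleftrightarrow> (i < length xs \<and> j < xs!i)"
  using assms
proof (induction xs arbitrary: i)
  case Nil then show ?case by simp
next
  case (Cons x xs)
  show ?case
  proof (cases "j < x")
    case True
    then show ?thesis using Cons by (cases i) auto
  next
    case False
    have "\<not> j < (x#xs)!i" if "i < length (x#xs)"
    proof (cases i)
      case 0 then show ?thesis using False by simp
    next
      case (Suc i') then have "xs!i' \<in> set xs" using that by simp
      then show ?thesis using Cons.prems False Suc by auto
    qed
    then show ?thesis using False by auto
  qed
qed

lemma hook_formula:
  assumes s: "sorted_wrt (\<ge>) xs" and i: "i < length xs" and j: "j < xs!i"
  shows "i < cnt xs j \<and> hook_length xs (i,j) + j + i + 1 = xs!i + cnt xs j"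
proof -
  have ic: "i < cnt xs j" using cnt_iff[OF s] i j by simp
  let ?A = "(\<lambda>a. (a,j)) ` {i<..<cnt xs j}"
  let ?B = "(\<lambda>b. (i,b)) ` {j<..<xs!i}"
  have eq: "{v \<in> young_cells xs. v = (i,j) \<or> (snd v = snd (i,j) \<and> fst v > fst (i,j)) \<or> (fst v = fst (i,j) \<and> snd v > snd (i,j))}
      = insert (i,j) (?A \<union> ?B)"
  proof (rule set_eqI)
    fix v :: "nat \<times> nat"
    obtain a c where v: "v = (a,c)" by (cases v)
    have ca: "a < cnt xs j \<longleftrightarrow> a < length xs \<and> j < xs!a" using cnt_iff[OF s] .
    show "v \<in> {v \<in> young_cells xs. v = (i,j) \<or> (snd v = snd (i,j) \<and> fst v > fst (i,j)) \<or> (fst v = fst (i,j) \<and> snd v > snd (i,j))}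
      \<longleftrightarrow> v \<in> insert (i,j) (?A \<union> ?B)"
      unfolding v young_cells_def using ca i j by auto
  qed
  have c1: "card ?A = cnt xs j - i - 1" by (subst card_image) (auto simp: inj_on_def)
  have c2: "card ?B = xs!i - j - 1" by (subst card_image) (auto simp: inj_on_def)
  have "card (insert (i,j) (?A \<union> ?B)) = Suc (card ?A + card ?B)"
  proof -
    have "?A \<inter> ?B = {}" by auto
    then have "card (?A \<union> ?B) = card ?A + card ?B" by (intro card_Un_disjoint) auto
    moreover have "(i,j) \<notin> ?A \<union> ?B" by auto
    ultimately show ?thesis by simp
  qed
  then have "hook_length xs (i,j) = Suc (card ?A + card ?B)"
    unfolding hook_length_def using eq by simp
  then show ?thesis using c1 c2 ic j by simp
qed

lemma cellk:
  assumes "sorted_wrt (\<ge>) L" "i < length L" "j < L!i" "L!i + cnt L j = k + j + i + 1"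
  shows "hook_length L (i,j) = k"
  using hook_formula[OF assms(1-3)] assms(4) by linarith

lemma finite_cells: "finite (young_cells xs)"
proof -
  have "young_cells xs \<subseteq> {..<length xs} \<times> {..<Suc (sum_list xs)}"
  proof
    fix v assume "v \<in> young_cells xs"
    then obtain i j where v: "v = (i,j)" "i < length xs" "j < xs!i" by (auto simp: young_cells_def)
    have "xs!i \<le> sum_list xs" using member_le_sum_list[of "xs!i" xs] v(2) by simp
    then show "v \<in> {..<length xs} \<times> {..<Suc (sum_list xs)}" using v by auto
  qed
  then show ?thesis by (rule finite_subset) auto
qed

lemma shift_hook:
  assumes s: "sorted_wrt (\<ge>) (B @ lam)" and c: "(i,j) \<in> young_cells lam"
  shows "hook_length (B @ lam) (i + length B, j) = hook_length lam (i,j)"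
proof -
  have sl: "sorted_wrt (\<ge>) lam" and sB: "\<forall>x\<in>set B. \<forall>y\<in>set lam. y \<le> x"
    using s by (auto simp: sorted_wrt_append)
  have i: "i < length lam" and j: "j < lam!i" using c by (auto simp: young_cells_def)
  have "lam!i \<in> set lam" using i by simp
  then have "\<forall>x\<in>set B. j < x" using sB j by fastforce
  then have cn: "cnt (B @ lam) j = length B + cnt lam j" by (simp add: cnt_append)
  have nth: "(B @ lam) ! (i + length B) = lam ! i" by (simp add: nth_append)
  note h1 = hook_formula[OF sl i j]
  note h2 = hook_formula[OF s, of "i + length B" j]
  show ?thesis using h1 h2 cn nth i j by simp
qed

lemma APP:
  assumes s: "sorted_wrt (\<ge>) (B @ lam)"
    and g: "\<forall>i<length B. g i < B!i \<and> hook_length (B @ lam) (i, g i) = k"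
  shows "length B + alpha k lam \<le> alpha k (B @ lam)"
proof -
  let ?S = "{u \<in> young_cells lam. hook_length lam u = k}"
  let ?T = "{u \<in> young_cells (B @ lam). hook_length (B @ lam) u = k}"
  let ?X = "(\<lambda>i. (i, g i)) ` {..<length B}"
  let ?Y = "(\<lambda>(a,c). (a + length B, c)) ` ?S"
  have sub: "?X \<union> ?Y \<subseteq> ?T"
  proof
    fix v assume "v \<in> ?X \<union> ?Y"
    then show "v \<in> ?T"
    proof
      assume "v \<in> ?X"
      then obtain i where "i < length B" "v = (i, g i)" by auto
      then show ?thesis using g by (auto simp: young_cells_def nth_append)
    next
      assume "v \<in> ?Y"
      then obtain a c where ac: "(a,c) \<in> ?S" "v = (a + length B, c)" by auto
      then show ?thesis using shift_hook[OF s, of a c]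
        by (auto simp: young_cells_def nth_append)
    qed
  qed
  have fS: "finite ?S" using finite_cells[of lam] by auto
  have cX: "card ?X = length B" by (subst card_image) (auto simp: inj_on_def)
  have cY: "card ?Y = card ?S" by (subst card_image) (auto simp: inj_on_def)
  have dis: "?X \<inter> ?Y = {}" by auto
  have "card (?X \<union> ?Y) = length B + card ?S"
    using card_Un_disjoint[of ?X ?Y] dis fS cX cY by simp
  moreover have "card (?X \<union> ?Y) \<le> card ?T"
    using sub finite_cells[of "B @ lam"] by (intro card_mono) auto
  ultimately show ?thesis unfolding alpha_def by simp
qed

lemma sorted_rep[simp]: "sorted_wrt (\<ge>) (replicate n (x::nat))"
  by (induction n) auto

lemma topA:
  assumes k: "k \<ge> 1" and h: "h \<le> k" and p: "p \<le> h" and ph: "p > 0 \<Longrightarrow> h < k"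
    and W: "W \<ge> k" and lb: "\<forall>y\<in>set lam. y \<le> W - k" and sl: "sorted_wrt (\<ge>) lam"
  shows "h + alpha k lam \<le> alpha k (replicate p (Suc W) @ replicate (h-p) W @ lam)"
proof -
  let ?B = "replicate p (Suc W) @ replicate (h-p) W"
  have s: "sorted_wrt (\<ge>) (?B @ lam)"
    using sl lb W by (auto simp: sorted_wrt_append)
  define g where "g i = (if i < p then W + h - k - i else W + h - (k + 1 + i))" for i
  have "\<forall>i<length ?B. g i < ?B!i \<and> hook_length (?B @ lam) (i, g i) = k"
  proof (intro allI impI)
    fix i assume i: "i < length ?B"
    then have ih: "i < h" using p by simp
    show "g i < ?B!i \<and> hook_length (?B @ lam) (i, g i) = k"
    proof (cases "i < p")
      case True
      have hk: "h < k" using ph True by simp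
      have nth: "(?B @ lam)!i = Suc W" "?B!i = Suc W" using True by (auto simp: nth_append)
      have gi: "g i = W + h - k - i" using True by (simp add: g_def)
      have "\<forall>y\<in>set lam. y \<le> g i" using lb gi ih hk W by fastforce
      moreover have "g i < W" using gi hk W ih True by simp
      ultimately have "cnt (?B @ lam) (g i) = h" using p
        by (simp add: cnt_append cnt_zero)
      moreover have "g i < ?B!i" using nth gi hk W by simp
      ultimately show ?thesis using cellk[OF s, of i "g i" k] nth gi i ih hk W by simp
    next
      case False
      have nth: "(?B @ lam)!i = W" "?B!i = W" using False ih by (auto simp: nth_append)
      have gi: "g i = W + h - (k + 1 + i)" using False by (simp add: g_def)
      have "\<forall>y\<in>set lam. y \<le> g i" using lb gi ih h W by fastforce
      moreover have "g i < W" using gi h W ih by simp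
      ultimately have "cnt (?B @ lam) (g i) = h" using p
        by (simp add: cnt_append cnt_zero)
      moreover have "g i < ?B!i" using nth gi h W ih by simp
      ultimately show ?thesis using cellk[OF s, of i "g i" k] nth gi i ih h W by simp
    qed
  qed
  from APP[OF s this] show ?thesis using p by simp
qed

lemma topE:
  assumes k: "k \<ge> 1" and h: "h \<le> k" "h \<ge> 1" and e: "e \<ge> k"
    and W: "W \<ge> k" and lb: "\<forall>y\<in>set lam. y \<le> W - k" and sl: "sorted_wrt (\<ge>) lam"
  shows "h + alpha k lam \<le> alpha k ((W + e) # replicate (h-1) W @ lam)"
proof -
  let ?B = "(W + e) # replicate (h-1) W"
  have s: "sorted_wrt (\<ge>) (?B @ lam)"
    using sl lb W by (auto simp: sorted_wrt_append)
  define g where "g i = (if i = 0 then W + e - k else W + h - (k + 1 + i))" for i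
  have "\<forall>i<length ?B. g i < ?B!i \<and> hook_length (?B @ lam) (i, g i) = k"
  proof (intro allI impI)
    fix i assume i: "i < length ?B"
    then have ih: "i < h" using h by simp
    show "g i < ?B!i \<and> hook_length (?B @ lam) (i, g i) = k"
    proof (cases "i = 0")
      case True
      have nth: "(?B @ lam)!i = W + e" "?B!i = W + e" using True by auto
      have gi: "g i = W + e - k" using True by (simp add: g_def)
      have "\<forall>y\<in>set lam. y \<le> g i" using lb gi W e by fastforce
      moreover have "\<not> g i < W" "g i < W + e" using gi k e W by auto
      ultimately have "cnt (?B @ lam) (g i) = 1"
        by (simp add: cnt_append cnt_zero)
      moreover have "g i < ?B!i" using nth gi k W by simp
      ultimately show ?thesis using cellk[OF s, of i "g i" k] nth gi True k e W by simp
    next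
      case False
      have nth: "(?B @ lam)!i = W" "?B!i = W" using False ih by (auto simp: nth_append nth_Cons')
      have gi: "g i = W + h - (k + 1 + i)" using False by (simp add: g_def)
      have "\<forall>y\<in>set lam. y \<le> g i" using lb gi ih h W by fastforce
      moreover have "g i < W" "g i < W + e" using gi h W ih by auto
      ultimately have "cnt (?B @ lam) (g i) = h" using h
        by (simp add: cnt_append cnt_zero)
      moreover have "g i < ?B!i" using nth gi h W ih by simp
      ultimately show ?thesis using cellk[OF s, of i "g i" k] nth gi i ih h W by simp
    qed
  qed
  from APP[OF s this] show ?thesis using h by simp
qed

lemma topP:
  assumes k: "k \<ge> 1" and p: "1 \<le> p" "p < k"
    and W: "W \<ge> k" and lb: "\<forall>y\<in>set rest. y \<le> W - k" and sl: "sorted_wrt (\<ge>) rest"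
  shows "k + alpha k ((W - k + p) # rest) \<le>
     alpha k (((W + p) # replicate (k-p-1) W @ replicate p (W-1)) @ ((W - k + p) # rest))"
proof -
  let ?B = "(W + p) # replicate (k-p-1) W @ replicate p (W-1)"
  let ?lam = "(W - k + p) # rest"
  let ?L = "?B @ ?lam"
  have s: "sorted_wrt (\<ge>) ?L"
    using sl lb W p by (auto simp: sorted_wrt_append)
  define g where "g i = W - 1 - i" for i
  have lenB: "length ?B = k" using p by simp
  have "\<forall>i<length ?B. g i < ?B!i \<and> hook_length ?L (i, g i) = k"
  proof (intro allI impI)
    fix i assume i: "i < length ?B"
    then have ik: "i < k" using lenB by simp
    consider (z) "i = 0" | (m) "1 \<le> i" "i \<le> k - p - 1" | (b) "k - p \<le> i" "i < k"
      using ik by linarith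
    then show "g i < ?B!i \<and> hook_length ?L (i, g i) = k"
    proof cases
      case z
      have nth: "?L!i = W + p" "?B!i = W + p" using z by auto
      have gi: "g i = W - 1" using z by (simp add: g_def)
      have "cnt ?L (g i) = k - p" using gi p W
        by (cases p) (simp_all add: cnt_append, linarith)
      note c = this
      have "hook_length ?L (i, g i) = k"
        apply (rule cellk[OF s])
        using z p apply simp
        using z p W gi apply simp
        apply (simp only: c nth)
        using gi z p W by linarith
      moreover have "g i < ?B!i" unfolding nth(2) using gi z p W by linarith
      ultimately show ?thesis by simp
    next
      case m
      have nth: "?L!i = W" "?B!i = W" using m ik by (auto simp: nth_append nth_Cons')
      have gi: "g i = W - 1 - i" by (simp add: g_def)
      have "cnt ?L (g i) = k" using gi p W m
        by (simp add: cnt_append) arith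
      note c = this
      have "hook_length ?L (i, g i) = k"
        apply (rule cellk[OF s])
        using m ik p apply simp
        apply (simp only: nth(1))
        using gi m p W apply linarith
        apply (simp only: c nth)
        using gi m p W by linarith
      moreover have "g i < ?B!i" unfolding nth(2) using gi m p W by linarith
      ultimately show ?thesis by simp
    next
      case b
      have nth: "?L!i = W - 1" "?B!i = W - 1" using b p by (auto simp: nth_append nth_Cons')
      have gi: "g i = W - 1 - i" by (simp add: g_def)
      have "\<forall>y\<in>set rest. y \<le> g i" using lb gi b W by fastforce
      then have "cnt ?L (g i) = Suc k" using gi p W b
        by (simp add: cnt_append cnt_zero) arith
      note c = this
      have "hook_length ?L (i, g i) = k"
        apply (rule cellk[OF s])
        using b ik p apply simp
        apply (simp only: nth(1))
        using gi b p W apply linarith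
        apply (simp only: c nth)
        using gi b p W by linarith
      moreover have "g i < ?B!i" unfolding nth(2) using gi b p W by linarith
      ultimately show ?thesis by simp
    qed
  qed
  from APP[OF s this] show ?thesis using lenB by simp
qed

fun S :: "nat \<Rightarrow> nat \<Rightarrow> nat list" where
  "S k 0 = []"
| "S k (Suc s) = replicate k (Suc s * k) @ S k s"

lemma S_props:
  assumes k: "k \<ge> 1"
  shows "sorted_wrt (\<ge>) (S k s) \<and> (\<forall>y\<in>set (S k s). 0 < y \<and> y \<le> s*k)
    \<and> 2 * sum_list (S k s) = k*k*(s*(s+1)) \<and> s*k \<le> alpha k (S k s)"
proof (induction s)
  case 0 then show ?case by simp
next
  case (Suc s)
  then have IH: "sorted_wrt (\<ge>) (S k s)" "\<forall>y\<in>set (S k s). 0 < y \<and> y \<le> s*k"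
    "2 * sum_list (S k s) = k*k*(s*(s+1))" "s*k \<le> alpha k (S k s)" by auto
  have A: "k + alpha k (S k s) \<le> alpha k (replicate 0 (Suc (Suc s * k)) @ replicate (k-0) (Suc s * k) @ S k s)"
    by (rule topA) (use k IH in auto)
  have so: "sorted_wrt (\<ge>) (S k (Suc s))" using IH by (auto simp: sorted_wrt_append)
  moreover have "\<forall>y\<in>set (S k (Suc s)). 0 < y \<and> y \<le> Suc s*k" using IH k by auto
  moreover have "2 * sum_list (S k (Suc s)) = k*k*(Suc s*(Suc s+1))"
    using IH(3) by (simp add: sum_list_replicate algebra_simps)
  moreover have "Suc s * k \<le> alpha k (S k (Suc s))" using A IH(4) by simp
  ultimately show ?case by blast
qed

fun P :: "nat \<Rightarrow> nat \<Rightarrow> nat \<Rightarrow> nat list" where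
  "P k p 0 = [p]"
| "P k p (Suc s) = ((Suc s * k + p) # replicate (k-p-1) (Suc s * k) @ replicate p (Suc s * k - 1)) @ P k p s"

lemma arithP: "(p::nat) < k \<Longrightarrow> 1 \<le> W \<Longrightarrow> W + p + (k-p-1)*W + p*(W-1) = k*W"
proof -
  assume a: "p < k" "1 \<le> W"
  define c where "c = k - p - 1"
  define w where "w = W - 1"
  have c: "k = p + 1 + c" using a(1) unfolding c_def by linarith
  have w: "W = w + 1" using a(2) unfolding w_def by linarith
  show ?thesis unfolding c w by (simp add: algebra_simps)
qed

lemma P_props:
  assumes k: "k \<ge> 1" and p: "1 \<le> p" "p < k"
  shows "(\<exists>rest. P k p s = (s*k+p) # rest \<and> (\<forall>y\<in>set rest. 0 < y \<and> y \<le> s*k) \<and> sorted_wrt (\<ge>) rest)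
    \<and> 2 * sum_list (P k p s) = k*k*(s*(s+1)) + 2*p \<and> s*k \<le> alpha k (P k p s)"
proof (induction s)
  case 0 then show ?case using p by simp
next
  case (Suc s)
  then obtain rest where r: "P k p s = (s*k+p) # rest" "\<forall>y\<in>set rest. 0 < y \<and> y \<le> s*k"
     "sorted_wrt (\<ge>) rest" and sm: "2 * sum_list (P k p s) = k*k*(s*(s+1)) + 2*p"
     and al: "s*k \<le> alpha k (P k p s)" by blast
  define W where "W = Suc s * k"
  have W: "W \<ge> k" "W - k + p = s*k + p" "W - k = s * k" unfolding W_def by auto
  have A: "k + alpha k ((W - k + p) # rest) \<le>
     alpha k (((W + p) # replicate (k-p-1) W @ replicate p (W-1)) @ ((W - k + p) # rest))"
    by (rule topP) (use k p W r in auto)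
  have eqP: "P k p (Suc s) = ((W + p) # replicate (k-p-1) W @ replicate p (W-1)) @ ((W - k + p) # rest)"
    using r W by (simp add: W_def)
  let ?rest = "replicate (k-p-1) W @ replicate p (W-1) @ (s*k+p) # rest"
  have e1: "P k p (Suc s) = (Suc s * k + p) # ?rest" using eqP W by (simp add: W_def)
  have e2: "\<forall>y\<in>set ?rest. 0 < y \<and> y \<le> Suc s*k" using r p W unfolding W_def by auto
  have e3: "sorted_wrt (\<ge>) ?rest" using r p W unfolding W_def by (auto simp: sorted_wrt_append)
  have "sum_list (P k p (Suc s)) = W + p + (k-p-1)*W + p*(W-1) + sum_list (P k p s)"
    using eqP r by (simp add: sum_list_replicate)
  also have "\<dots> = k * W + sum_list (P k p s)" using arithP[OF p(2), of W] W k by simp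
  finally have "2 * sum_list (P k p (Suc s)) = k*k*(Suc s*(Suc s+1)) + 2*p"
    using sm unfolding W_def by (simp add: algebra_simps)
  moreover have "Suc s * k \<le> alpha k (P k p (Suc s))" using A al eqP r W by simp
  ultimately show ?case using e1 e2 e3 by blast
qed

lemma length_le_sum: "0 \<notin> set (xs::nat list) \<Longrightarrow> length xs \<le> sum_list xs"
  by (induction xs) auto

lemma finite_partitions: "finite (partitions n)"
proof -
  have "partitions n \<subseteq> {xs. set xs \<subseteq> {..n} \<and> length xs \<le> n}"
  proof
    fix xs assume "xs \<in> partitions n"
    then have a: "0 \<notin> set xs" "sum_list xs = n" by (auto simp: partitions_def)
    have "set xs \<subseteq> {..n}" using a member_le_sum_list[of _ xs] by auto
    moreover have "length xs \<le> n" using length_le_sum[OF a(1)] a(2) by simp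
    ultimately show "xs \<in> {xs. set xs \<subseteq> {..n} \<and> length xs \<le> n}" by simp
  qed
  moreover have "finite {xs. set xs \<subseteq> {..n} \<and> length xs \<le> (n::nat)}"
    by (rule finite_lists_length_le) simp
  ultimately show ?thesis by (rule finite_subset)
qed

lemma b_ge:
  assumes "sorted_wrt (\<ge>) lam" "0 \<notin> set lam" "sum_list lam = n" "m \<le> alpha k lam"
  shows "m \<le> b n k"
proof -
  have "lam \<in> partitions n" using assms by (simp add: partitions_def)
  then have "alpha k lam \<le> b n k" unfolding b_def
    using finite_partitions by (intro Max_ge) auto
  then show ?thesis using assms(4) by simp
qed

lemma t_eq:
  fixes m k :: nat
  defines "q \<equiv> m div k" and "r \<equiv> m mod k"
  shows "2 * t m k = int (k*k*(q*(q+1)) + 2*(r*((q+1)*k)))"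
proof -
  have m: "m = q*k + r" unfolding q_def r_def by simp
  have e: "even ((q+1)*q)" by simp
  have c: "2 * int ((q+1) choose 2) = int ((q+1)*q)"
  proof -
    have "2 * ((q+1) choose 2) = (q+1)*q" unfolding choose_two using e
      by (simp add: even_two_times_div_two)
    then have "int (2 * ((q+1) choose 2)) = int ((q+1)*q)" by (rule arg_cong)
    then show ?thesis by simp
  qed
  have "2 * t m k = 2 * (int m * (int q + 1) * int k) - (2 * int ((q+1) choose 2)) * int k ^ 2"
    unfolding t_def q_def by (simp add: algebra_simps)
  also have "\<dots> = 2 * (int m * (int q + 1) * int k) - int ((q+1)*q) * int k ^ 2" using c by simp
  also have "\<dots> = int (k*k*(q*(q+1)) + 2*(r*((q+1)*k)))"
    unfolding m by (simp add: algebra_simps power2_eq_square)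
  finally show ?thesis .
qed

theorem theorem4p2:
  fixes m k n :: nat
  assumes "k \<ge> 1" and "int n \<ge> t m k"
  shows "b n k \<ge> m"
proof -
  have k: "k \<ge> 1" by fact
  define q where "q = m div k"
  define r where "r = m mod k"
  have m: "m = q*k + r" unfolding q_def r_def by simp
  have rk: "r < k" unfolding r_def using k by simp
  define X where "X = q*(q+1) div 2"
  have X: "2 * X = q*(q+1)" unfolding X_def by simp
  define T where "T = k*k*X + r*((q+1)*k)"
  have "k*k*(q*(q+1)) + 2*(r*((q+1)*k)) = 2 * T"
    unfolding T_def X[symmetric] by (simp add: algebra_simps)
  then have "2 * t m k = int (2 * T)"
    using t_eq[of m k] unfolding q_def[symmetric] r_def[symmetric] by simp
  then have nT: "n \<ge> T" using assms(2) by linarith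
  define d where "d = n - T"
  have n: "n = T + d" using nT unfolding d_def by simp
  have SP: "\<And>s. sorted_wrt (\<ge>) (S k s) \<and> (\<forall>y\<in>set (S k s). 0 < y \<and> y \<le> s*k)
    \<and> 2 * sum_list (S k s) = k*k*(s*(s+1)) \<and> s*k \<le> alpha k (S k s)"
    using S_props[OF k] by blast
  have Sq: "sum_list (S k q) = k*k*X"
  proof -
    have "2 * sum_list (S k q) = k*k*(2*X)" using SP[of q] unfolding X by blast
    then show ?thesis by simp
  qed
  show ?thesis
  proof (cases "r \<ge> 1")
    case r1: True
    show ?thesis
    proof (cases "d < k")
      case True
      define W where "W = (q+1)*k + d div r"
      define p where "p = d mod r"
      have pr: "p < r" unfolding p_def using r1 by simp
      let ?lam = "replicate p (Suc W) @ replicate (r-p) W @ S k q"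
      have A: "r + alpha k (S k q) \<le> alpha k ?lam"
        by (rule topA) (use k rk pr SP[of q] in \<open>auto simp: W_def\<close>)
      have le: "\<forall>y\<in>set (S k q). y \<le> W" using SP[of q] unfolding W_def
        by (auto intro: order_trans[of _ "q*k"])
      have so: "sorted_wrt (\<ge>) ?lam" using SP[of q] le by (auto simp: sorted_wrt_append)
      have nz: "0 \<notin> set ?lam" using SP[of q] k unfolding W_def by auto
      have "sum_list ?lam = p * Suc W + (r - p) * W + k*k*X" using Sq by (simp add: sum_list_replicate)
      also have "\<dots> = r * W + p + k*k*X" using pr
        by (simp add: algebra_simps diff_mult_distrib)
      also have "\<dots> = n" unfolding n T_def W_def p_def
        using div_mult_mod_eq[of d r] by (simp add: algebra_simps)
      finally have sm: "sum_list ?lam = n" .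
      have "m \<le> alpha k ?lam" using A SP[of q] m by simp
      then show ?thesis using b_ge[OF so nz sm] by simp
    next
      case False
      define W where "W = (q+1)*k"
      let ?lam = "(W + d) # replicate (r-1) W @ S k q"
      have A: "r + alpha k (S k q) \<le> alpha k ?lam"
        by (rule topE) (use k rk r1 False SP[of q] in \<open>auto simp: W_def\<close>)
      have le: "\<forall>y\<in>set (S k q). y \<le> W" using SP[of q] unfolding W_def by auto
      have so: "sorted_wrt (\<ge>) ?lam" using SP[of q] le by (auto simp: sorted_wrt_append)
      have nz: "0 \<notin> set ?lam" using SP[of q] k unfolding W_def by auto
      have "sum_list ?lam = W + d + (r - 1) * W + k*k*X" using Sq by (simp add: sum_list_replicate)
      also have "\<dots> = r * W + d + k*k*X" using r1
        by (cases r) (simp_all add: algebra_simps)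
      also have "\<dots> = n" unfolding n T_def W_def by (simp add: algebra_simps)
      finally have sm: "sum_list ?lam = n" .
      have "m \<le> alpha k ?lam" using A SP[of q] m by simp
      then show ?thesis using b_ge[OF so nz sm] by simp
    qed
  next
    case False
    then have r0: "r = 0" by simp
    show ?thesis
    proof (cases "q = 0")
      case True then show ?thesis using m r0 by simp
    next
      case qpos: False
      then obtain q' where q': "q = Suc q'" by (cases q) auto
      consider (d0) "d = 0" | (dm) "1 \<le> d" "d < k" | (dk) "d \<ge> k" by linarith
      then show ?thesis
      proof cases
        case d0
        have sm: "sum_list (S k q) = n" using Sq n d0 r0 unfolding T_def by simp
        have nz: "0 \<notin> set (S k q)" using SP[of q] by auto
        show ?thesis using b_ge[OF _ nz sm] SP[of q] m r0 by simp
      next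
        case dm
        note PP = P_props[OF k dm(1) dm(2), of q]
        then obtain rest where r: "P k d q = (q*k+d) # rest" "\<forall>y\<in>set rest. 0 < y \<and> y \<le> q*k"
          "sorted_wrt (\<ge>) rest" by blast
        have so: "sorted_wrt (\<ge>) (P k d q)" using r by auto
        have nz: "0 \<notin> set (P k d q)" using r dm by auto
        have "2 * sum_list (P k d q) = k*k*(2*X) + 2*d" using PP unfolding X by blast
        then have "2 * sum_list (P k d q) = 2 * n" using n r0 unfolding T_def by (simp add: algebra_simps)
        then have sm: "sum_list (P k d q) = n" by simp
        show ?thesis using b_ge[OF so nz sm] PP m r0 by simp
      next
        case dk
        define W where "W = q*k"
        let ?lam = "(W + d) # replicate (k-1) W @ S k q'"
        have A: "k + alpha k (S k q') \<le> alpha k ?lam"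
          by (rule topE) (use k dk SP[of q'] in \<open>auto simp: W_def q'\<close>)
        have le: "\<forall>y\<in>set (S k q'). y \<le> W" using SP[of q'] unfolding W_def q' by auto
        have so: "sorted_wrt (\<ge>) ?lam" using SP[of q'] le by (auto simp: sorted_wrt_append)
        have nz: "0 \<notin> set ?lam" using SP[of q'] k unfolding W_def q' by auto
        have s2: "2 * sum_list (S k q') = k*k*(q'*(q'+1))" using SP[of q'] by blast
        have "2 * sum_list ?lam = 2 * (W + d + (k - 1) * W) + 2 * sum_list (S k q')"
          by (simp add: sum_list_replicate)
        also have "\<dots> = 2 * (k * W + d) + k*k*(q'*(q'+1))" using k s2
          by (cases k) (simp_all add: algebra_simps)
        also have "\<dots> = k*k*(q'*(q'+1) + 2*q) + 2*d" unfolding W_def by (simp add: algebra_simps)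
        also have "q'*(q'+1) + 2*q = 2*X" unfolding X q' by (simp add: algebra_simps)
        also have "k*k*(2*X) + 2*d = 2 * n" unfolding n T_def r0 by (simp add: algebra_simps)
        finally have sm: "sum_list ?lam = n" by simp
        have "m \<le> alpha k ?lam" using A SP[of q'] m r0 q' by (simp add: algebra_simps)
        then show ?thesis using b_ge[OF so nz sm] by simp
      qed
    qed
  qed
qed

end
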